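(* There exist absolute constants $c, C > 0$, an infinite set $S$ of positive integers, and for each $n \in S$ a union-closed family $\mathcal{F}_n \subset \mathcal{P}([n])$ with $\mathcal{F}_n \neq \emptyset$, $\mathcal{F}_n \neq \{\emptyset\}$ and $|\mathcal{F}_n| \to \infty$ as $n \to \infty$ in $S$, such that for every $n \in S$, $$c\,\frac{\log_2 \log_2 |\mathcal{F}_n|}{\log_2 |\mathcal{F}_n|} \;\leq\; \mathrm{AOD}(\mathcal{F}_n) \;\leq\; C\,\frac{\log_2 \log_2 |\mathcal{F}_n|}{\log_2 |\mathcal{F}_n|}.$$
   Context: $[n] = \{1,2,\ldots,n\}$. A family $\mathcal{F}$ of subsets of a set $X$ is union-closed if $A \cup B \in \mathcal{F}$ whenever $A, B \in \mathcal{F}$. For a finite nonempty family $\mathcal{F} \subset \mathcal{P}(X)$ and $x \in X$, the abundance of $x$ is $\gamma_x = |\{A \in \mathcal{F} : x \in A\}|/|\mathcal{F}|$. For $\mathcal{F} \neq \emptyset, \{\emptyset\}$, the average overlap density is $$\mathrm{AOD}(\mathcal{F}) = \frac{1}{|\mathcal{F}\setminus\{\emptyset\}|}\sum_{A \in \mathcal{F}\setminus\{\emptyset\}} \frac{1}{|A|}\sum_{x \in A} \gamma_x = \mathbb{E}_{A \in \mathcal{F}\setminus\{\emptyset\}}\,\mathbb{E}_{B \in \mathcal{F}}\left[\frac{|A\cap B|}{|A|}\right],$$ with $A$ and $B$ uniform. *)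

theory Defs
  imports "HOL-Analysis.Analysis"
begin

definition union_closed :: "'a set set \<Rightarrow> bool" where
  "union_closed F \<longleftrightarrow> (\<forall>A\<in>F. \<forall>B\<in>F. A \<union> B \<in> F)"

definition abundance :: "'a set set \<Rightarrow> 'a \<Rightarrow> real" where
  "abundance F x = real (card {A\<in>F. x \<in> A}) / real (card F)"

definition AOD :: "'a set set \<Rightarrow> real" where
  "AOD F = (1 / real (card (F - {{}}))) *
     (\<Sum>A\<in>F - {{}}. (1 / real (card A)) * (\<Sum>x\<in>A. abundance F x))"

end

theory Submission
  imports Defs
begin

definition LL :: "nat \<Rightarrow> nat \<Rightarrow> nat" where "LL k j = (k^2)^j - 1"
definition PP :: "nat \<Rightarrow> nat" where "PP k = LL k k"
definition Phi :: "nat \<Rightarrow> (nat \<Rightarrow> nat) \<Rightarrow> nat set" where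
  "Phi k f = (\<Union>i\<in>{..<k}. {i * PP k + 1 .. i * PP k + LL k (f i)})"
definition DD :: "nat \<Rightarrow> (nat \<Rightarrow> nat) set" where "DD k = PiE {..<k} (\<lambda>_. {0..k})"
definition zz :: "nat \<Rightarrow> nat \<Rightarrow> nat" where "zz k = restrict (\<lambda>_. 0) {..<k}"

lemma L_mono: "a \<le> b \<Longrightarrow> LL k a \<le> LL k b" if "k \<ge> 1" for a b k
proof -
  assume "a \<le> b"
  have "(k^2)^a \<le> (k^2)^b" using that \<open>a \<le> b\<close> by (intro power_increasing) auto
  thus ?thesis unfolding LL_def by linarith
qed

lemma L_strict: "a < b \<Longrightarrow> LL k a < LL k b" if "k \<ge> 2" for a b k
proof -
  assume "a < b"
  have "k*k \<ge> 2*2" using that mult_le_mono by blast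
  hence "k^2 > (1::nat)" by (simp add: power2_eq_square)
  hence "(k^2)^a < (k^2)^b" using \<open>a < b\<close> by (intro power_strict_increasing) auto
  moreover have "(k^2)^a \<ge> 1" using that by simp
  ultimately show ?thesis unfolding LL_def by linarith
qed

lemma L_less_imp: "LL k a < LL k b \<Longrightarrow> a < b" if "k \<ge> 2"
  using L_mono[of k b a] that by (meson leI not_le le_trans one_le_numeral)

lemma L_inj: "LL k a = LL k b \<Longrightarrow> a = b" if "k \<ge> 2"
  using L_strict[OF that, of a b] L_strict[OF that, of b a] by (metis linorder_neqE_nat less_irrefl)

lemma L_zero: "LL k 0 = 0" by (simp add: LL_def)

lemma L_le_P: "a \<le> k \<Longrightarrow> LL k a \<le> PP k" if "k \<ge> 1"
  unfolding PP_def using L_mono[OF that] by blast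

lemma L_ratio: assumes k1: "k \<ge> 1" and M1: "M \<ge> 1" shows "k * LL k (M - 1) * k \<le> LL k M"
proof -
  obtain m where M: "M = Suc m" using M1 by (cases M) auto
  have "k * LL k (M - 1) * k = k^2 * ((k^2)^m - 1)" by (simp add: LL_def M power2_eq_square)
  also have "\<dots> = k^2 * (k^2)^m - k^2" by (simp add: right_diff_distrib')
  also have "\<dots> \<le> k^2 * (k^2)^m - 1" using k1 by (simp add: diff_le_mono2)
  also have "\<dots> = LL k M" by (simp add: LL_def M)
  finally show ?thesis .
qed

lemma DD_le: "f \<in> DD k \<Longrightarrow> i < k \<Longrightarrow> f i \<le> k"
  unfolding DD_def using PiE_mem[of f "{..<k}" "\<lambda>_. {0..k}" i] by simp

lemma mem_Phi:
  assumes k: "k \<ge> 2" and f: "f \<in> DD k" and i: "i < k" and q: "1 \<le> q" "q \<le> PP k"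
  shows "(i * PP k + q \<in> Phi k f) \<longleftrightarrow> q \<le> LL k (f i)"
proof
  assume "q \<le> LL k (f i)"
  hence "i * PP k + q \<in> {i * PP k + 1 .. i * PP k + LL k (f i)}" using q by simp
  thus "i * PP k + q \<in> Phi k f" unfolding Phi_def using i by blast
next
  assume "i * PP k + q \<in> Phi k f"
  then obtain j where j: "j < k" "j * PP k + 1 \<le> i * PP k + q" "i * PP k + q \<le> j * PP k + LL k (f j)"
    unfolding Phi_def by auto
  have "f j \<le> k" using DD_le[OF f j(1)] .
  moreover have "k \<ge> 1" using k by simp
  ultimately have fj: "LL k (f j) \<le> PP k" using L_le_P[of k "f j"] by blast
  have "j = i"
  proof (rule ccontr)
    assume "j \<noteq> i"
    then consider "j \<ge> i + 1" | "i \<ge> j + 1" by linarith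
    thus False
    proof cases
      case 1
      hence "j * PP k \<ge> (i+1) * PP k" by (rule mult_le_mono1)
      moreover have "(i+1) * PP k = i * PP k + PP k" by simp
      ultimately show False using j q by linarith
    next
      case 2
      hence "i * PP k \<ge> (j+1) * PP k" by (rule mult_le_mono1)
      moreover have "(j+1) * PP k = j * PP k + PP k" by simp
      ultimately show False using j q fj by linarith
    qed
  qed
  thus "q \<le> LL k (f i)" using j by simp
qed


lemma Phi_inj: assumes k: "k \<ge> 2" shows "inj_on (Phi k) (DD k)"
proof (rule inj_onI)
  fix f g assume f: "f \<in> DD k" and g: "g \<in> DD k" and eq: "Phi k f = Phi k g"
  have "f i = g i" if i: "i < k" for i
  proof -
    have P: "LL k (f i) \<le> PP k" "LL k (g i) \<le> PP k" using DD_le[OF f i] DD_le[OF g i] k L_le_P by auto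
    have iff: "q \<le> LL k (f i) \<longleftrightarrow> q \<le> LL k (g i)" if "1 \<le> q" "q \<le> PP k" for q
      using mem_Phi[OF k f i that] mem_Phi[OF k g i that] eq by simp
    have "LL k (f i) = LL k (g i)"
    proof (rule ccontr)
      assume ne: "LL k (f i) \<noteq> LL k (g i)"
      then consider "LL k (f i) < LL k (g i)" | "LL k (g i) < LL k (f i)" by linarith
      thus False
      proof cases
        case 1 thus False using iff[of "LL k (g i)"] P by linarith
      next
        case 2 thus False using iff[of "LL k (f i)"] P by linarith
      qed
    qed
    thus ?thesis using L_inj[OF k] by blast
  qed
  thus "f = g" using f g unfolding DD_def by (intro PiE_ext) auto
qed

lemma Phi_sub: assumes k: "k \<ge> 2" and f: "f \<in> DD k" shows "Phi k f \<subseteq> {1..k * PP k}"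
proof
  fix x assume "x \<in> Phi k f"
  then obtain i where i: "i < k" "i * PP k + 1 \<le> x" "x \<le> i * PP k + LL k (f i)" unfolding Phi_def by auto
  have "LL k (f i) \<le> PP k" using DD_le[OF f i(1)] k L_le_P by auto
  moreover have "(i+1) * PP k \<le> k * PP k" using i(1) by (intro mult_le_mono1) auto
  moreover have "(i+1) * PP k = i * PP k + PP k" by simp
  ultimately show "x \<in> {1..k * PP k}" using i by simp
qed

lemma Phi_union: assumes k: "k \<ge> 2" and f: "f \<in> DD k" and g: "g \<in> DD k"
  shows "Phi k f \<union> Phi k g = Phi k (restrict (\<lambda>i. max (f i) (g i)) {..<k})"
    and "restrict (\<lambda>i. max (f i) (g i)) {..<k} \<in> DD k"
proof -
  have "{i * PP k + 1 .. i * PP k + LL k (max (f i) (g i))} =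
        {i * PP k + 1 .. i * PP k + LL k (f i)} \<union> {i * PP k + 1 .. i * PP k + LL k (g i)}" for i
  proof (cases "f i \<le> g i")
    case True thus ?thesis using L_mono[of k "f i" "g i"] k by (auto simp: max_def)
  next
    case False thus ?thesis using L_mono[of k "g i" "f i"] k by (auto simp: max_def)
  qed
  thus "Phi k f \<union> Phi k g = Phi k (restrict (\<lambda>i. max (f i) (g i)) {..<k})"
    unfolding Phi_def by auto
  show "restrict (\<lambda>i. max (f i) (g i)) {..<k} \<in> DD k" unfolding DD_def
  proof (rule restrict_PiE_iff[THEN iffD2], intro ballI)
    fix i assume "i \<in> {..<k}"
    thus "max (f i) (g i) \<in> {0..k}" using DD_le[OF f, of i] DD_le[OF g, of i] by simp
  qed
qed

lemma zz_DD: "zz k \<in> DD k" unfolding zz_def DD_def by auto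

lemma Phi_empty_iff: assumes k: "k \<ge> 2" and f: "f \<in> DD k" shows "Phi k f = {} \<longleftrightarrow> f = zz k"
proof
  assume e: "Phi k f = {}"
  have "f i = 0" if i: "i < k" for i
  proof (rule ccontr)
    assume "f i \<noteq> 0"
    hence "LL k (f i) > LL k 0" using L_strict[OF k] by auto
    hence "i * PP k + 1 \<in> Phi k f" unfolding Phi_def L_zero using i by auto
    thus False using e by simp
  qed
  thus "f = zz k" using f zz_DD[of k] unfolding zz_def unfolding zz_def DD_def by (intro PiE_ext) auto
next
  assume "f = zz k" thus "Phi k f = {}" unfolding Phi_def zz_def by (simp add: L_zero)
qed

lemma card_DD: "card (DD k) = (k+1)^k" unfolding DD_def by (simp add: card_PiE)

lemma finite_DD: "finite (DD k)" unfolding DD_def by (simp add: finite_PiE)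

lemma card_ge: assumes i: "i < k" and M: "M \<le> k"
  shows "card {g\<in>DD k. M \<le> g i} = (k+1-M)*(k+1)^(k-1)"
proof -
  have "{g\<in>DD k. M \<le> g i} = PiE {..<k} (\<lambda>j. if j = i then {M..k} else {0..k})"
  proof (intro set_eqI iffI)
    fix g assume "g \<in> {g\<in>DD k. M \<le> g i}"
    hence g: "g \<in> DD k" "M \<le> g i" by auto
    have e: "g \<in> extensional {..<k}" using g(1) unfolding DD_def PiE_iff by blast
    show "g \<in> PiE {..<k} (\<lambda>j. if j = i then {M..k} else {0..k})" unfolding PiE_iff
    proof (intro conjI ballI e)
      fix j assume j: "j \<in> {..<k}"
      show "g j \<in> (if j = i then {M..k} else {0..k})" using DD_le[OF g(1), of j] j g(2) by (cases "j = i") auto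
    qed
  next
    fix g assume g: "g \<in> PiE {..<k} (\<lambda>j. if j = i then {M..k} else {0..k})"
    have e: "g \<in> extensional {..<k}" using g unfolding PiE_iff by blast
    have "g j \<in> {0..k}" if "j < k" for j using PiE_mem[OF g, of j] that by (cases "j = i") auto
    hence "g \<in> DD k" unfolding DD_def PiE_iff using e by blast
    moreover have "M \<le> g i" using PiE_mem[OF g, of i] i by simp
    ultimately show "g \<in> {g\<in>DD k. M \<le> g i}" by simp
  qed
  hence "card {g\<in>DD k. M \<le> g i} = (\<Prod>j<k. card (if j = i then {M..k} else {0..k}))"
    by (simp add: card_PiE)
  also have "\<dots> = card {M..k} * (\<Prod>j\<in>{..<k}-{i}. card (if j = i then {M..k} else {0..k}))"
    using i by (subst prod.remove[of _ i]) auto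
  also have "(\<Prod>j\<in>{..<k}-{i}. card (if j = i then {M..k} else {0..k})) = (\<Prod>j\<in>{..<k}-{i}. k+1)"
    by (intro prod.cong) auto
  also have "\<dots> = (k+1)^(k-1)" using i by simp
  finally show ?thesis using M by simp
qed

lemma AOD_reindex:
  assumes inj: "inj_on \<Phi> D" and fin: "finite D" and z: "z \<in> D" "\<Phi> z = {}"
    and ne: "\<And>f. f \<in> D \<Longrightarrow> \<Phi> f = {} \<Longrightarrow> f = z"
  shows "AOD (\<Phi> ` D) = (1 / real (card D - 1)) *
     (\<Sum>f\<in>D - {z}. (1 / real (card (\<Phi> f))) * (\<Sum>x\<in>\<Phi> f. abundance (\<Phi> ` D) x))"
proof -
  have e: "\<Phi> ` D - {{}} = \<Phi> ` (D - {z})"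
  proof (intro set_eqI iffI)
    fix A assume "A \<in> \<Phi> ` D - {{}}"
    then obtain f where "f \<in> D" "A = \<Phi> f" "A \<noteq> {}" by auto
    moreover hence "f \<noteq> z" using z by auto
    ultimately show "A \<in> \<Phi> ` (D - {z})" by auto
  next
    fix A assume "A \<in> \<Phi> ` (D - {z})"
    then obtain f where f: "f \<in> D" "f \<noteq> z" "A = \<Phi> f" by auto
    hence "A \<noteq> {}" using ne by blast
    thus "A \<in> \<Phi> ` D - {{}}" using f by auto
  qed
  have inj': "inj_on \<Phi> (D - {z})" using inj by (rule inj_on_subset) auto
  have c: "card (\<Phi> ` D - {{}}) = card D - 1"
    unfolding e using card_image[OF inj'] z fin by simp
  have s: "(\<Sum>A\<in>\<Phi> ` D - {{}}. (1 / real (card A)) * (\<Sum>x\<in>A. abundance (\<Phi> ` D) x)) =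
     (\<Sum>f\<in>D - {z}. (1 / real (card (\<Phi> f))) * (\<Sum>x\<in>\<Phi> f. abundance (\<Phi> ` D) x))"
    unfolding e by (rule sum.reindex[OF inj', unfolded comp_def])
  show ?thesis unfolding AOD_def c s ..
qed

lemma abundance_image:
  assumes inj: "inj_on \<Phi> D"
  shows "abundance (\<Phi> ` D) x = real (card {f\<in>D. x \<in> \<Phi> f}) / real (card D)"
proof -
  have "{A \<in> \<Phi> ` D. x \<in> A} = \<Phi> ` {f\<in>D. x \<in> \<Phi> f}" by auto
  moreover have "inj_on \<Phi> {f\<in>D. x \<in> \<Phi> f}" using inj by (rule inj_on_subset) auto
  ultimately have "card {A \<in> \<Phi> ` D. x \<in> A} = card {f\<in>D. x \<in> \<Phi> f}" using card_image by simp
  moreover have "card (\<Phi> ` D) = card D" using card_image[OF inj] .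
  ultimately show ?thesis unfolding abundance_def by simp
qed

definition Fam :: "nat \<Rightarrow> nat set set" where "Fam k = Phi k ` DD k"

lemma ab_Fam: assumes k: "k \<ge> 2"
  shows "abundance (Fam k) x = real (card {g\<in>DD k. x \<in> Phi k g}) / real ((k+1)^k)"
  unfolding Fam_def abundance_image[OF Phi_inj[OF k]] card_DD ..

lemma Phi_elim: assumes "x \<in> Phi k f"
  obtains i q where "i < k" "x = i * PP k + q" "1 \<le> q" "q \<le> LL k (f i)"
proof -
  from assms obtain i where i: "i < k" "i * PP k + 1 \<le> x" "x \<le> i * PP k + LL k (f i)" unfolding Phi_def by auto
  show ?thesis using that[of i "x - i * PP k"] i by auto
qed

lemma ab_lo: assumes k: "k \<ge> 2" and f: "f \<in> DD k" and x: "x \<in> Phi k f"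
  shows "abundance (Fam k) x \<ge> 1 / real (k+1)"
proof -
  obtain i q where iq: "i < k" "x = i * PP k + q" "1 \<le> q" "q \<le> LL k (f i)" using Phi_elim[OF x] by blast
  have qP: "q \<le> PP k" using iq(4) L_le_P[of k "f i"] DD_le[OF f iq(1)] k by simp
  have sub: "{g\<in>DD k. k \<le> g i} \<subseteq> {g\<in>DD k. x \<in> Phi k g}"
  proof safe
    fix g assume g: "g \<in> DD k" "k \<le> g i"
    hence "g i = k" using DD_le[OF g(1) iq(1)] by simp
    hence "q \<le> LL k (g i)" using qP unfolding PP_def by simp
    thus "x \<in> Phi k g" using mem_Phi[OF k g(1) iq(1) iq(3) qP] iq(2) by simp
  qed
  have "card {g\<in>DD k. k \<le> g i} \<le> card {g\<in>DD k. x \<in> Phi k g}"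
    using sub finite_DD by (intro card_mono) auto
  hence c: "(k+1)^(k-1) \<le> card {g\<in>DD k. x \<in> Phi k g}" using card_ge[OF iq(1), of k] by simp
  have N: "real ((k+1)^k) = real (k+1) * real ((k+1)^(k-1))"
    using k by (metis Suc_diff_1 of_nat_mult less_le_trans pos2 power_Suc zero_less_numeral)
  have c': "real ((k+1)^(k-1)) \<le> real (card {g\<in>DD k. x \<in> Phi k g})" using c by (simp only: of_nat_le_iff)
  have "1 / real (k+1) = real ((k+1)^(k-1)) / real ((k+1)^k)" unfolding N by simp
  also have "\<dots> \<le> real (card {g\<in>DD k. x \<in> Phi k g}) / real ((k+1)^k)"
    using c' by (intro divide_right_mono) simp_all
  finally show ?thesis unfolding ab_Fam[OF k] .
qed

lemma ab_hi: assumes k: "k \<ge> 2" and i: "i < k" and M: "1 \<le> M" "M \<le> k"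
  and q: "LL k (M - 1) < q" "q \<le> PP k"
  shows "abundance (Fam k) (i * PP k + q) \<le> real (k+1-M) / real (k+1)"
proof -
  have sub: "{g\<in>DD k. i * PP k + q \<in> Phi k g} \<subseteq> {g\<in>DD k. M \<le> g i}"
  proof safe
    fix g assume g: "g \<in> DD k" "i * PP k + q \<in> Phi k g"
    have "1 \<le> q" using q by linarith
    hence "q \<le> LL k (g i)" using mem_Phi[OF k g(1) i _ q(2)] g(2) by simp
    hence "LL k (M - 1) < LL k (g i)" using q by linarith
    hence "M - 1 < g i" using L_less_imp[OF k] by blast
    thus "M \<le> g i" by linarith
  qed
  have "card {g\<in>DD k. i * PP k + q \<in> Phi k g} \<le> card {g\<in>DD k. M \<le> g i}"
    using sub finite_DD by (intro card_mono) auto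
  hence c: "card {g\<in>DD k. i * PP k + q \<in> Phi k g} \<le> (k+1-M)*(k+1)^(k-1)" using card_ge[OF i M(2)] by simp
  have N: "real ((k+1)^k) = real (k+1) * real ((k+1)^(k-1))"
    using k by (metis Suc_diff_1 of_nat_mult less_le_trans pos2 power_Suc zero_less_numeral)
  have c': "real (card {g\<in>DD k. i * PP k + q \<in> Phi k g}) \<le> real ((k+1-M)*(k+1)^(k-1))" using c by (simp only: of_nat_le_iff)
  have "real (card {g\<in>DD k. i * PP k + q \<in> Phi k g}) / real ((k+1)^k) \<le> real ((k+1-M)*(k+1)^(k-1)) / real ((k+1)^k)"
    using c' by (intro divide_right_mono) simp_all
  also have "\<dots> = real (k+1-M) / real (k+1)" unfolding N by simp
  finally show ?thesis unfolding ab_Fam[OF k] .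
qed

lemma ab_le1: assumes k: "k \<ge> 2" shows "abundance (Fam k) x \<le> 1"
proof -
  have "card {g\<in>DD k. x \<in> Phi k g} \<le> card (DD k)" using finite_DD by (intro card_mono) auto
  hence le: "real (card {g\<in>DD k. x \<in> Phi k g}) \<le> real (card (DD k))" by (simp only: of_nat_le_iff)
  have pos: "real (card (DD k)) > 0" unfolding card_DD by simp
  show ?thesis unfolding ab_Fam[OF k] card_DD[symmetric] using le pos by (simp add: field_simps)
qed

lemma Phi_finite: "finite (Phi k f)" unfolding Phi_def by auto

lemma ratio_le:
  assumes k: "k \<ge> 2" and f: "f \<in> DD k" and fz: "f \<noteq> zz k"
  shows "(1 / real (card (Phi k f))) * (\<Sum>x\<in>Phi k f. abundance (Fam k) x)
           \<le> real (k + 1 - Max (f ` {..<k})) / real (k+1) + 1 / real k"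
proof -
  define M where "M = Max (f ` {..<k})"
  define A where "A = Phi k f"
  have "0 \<in> {..<k}" using k by simp
  hence finI: "finite (f ` {..<k})" "f ` {..<k} \<noteq> {}" by auto
  have Mk: "M \<le> k" unfolding M_def using finI DD_le[OF f] by (simp add: Max_le_iff)
  obtain i0 where i0: "i0 < k" "f i0 = M" unfolding M_def using Max_in[OF finI] by auto
  have M1: "M \<ge> 1"
  proof (rule ccontr)
    assume "\<not> M \<ge> 1"
    hence M0: "M = 0" by simp
    have "\<forall>i<k. f i = 0"
    proof (intro allI impI)
      fix i assume "i < k"
      hence "f i \<le> M" unfolding M_def using finI(1) by (intro Max_ge) auto
      thus "f i = 0" using M0 by simp
    qed
    hence "f = zz k" using f zz_DD[of k] unfolding zz_def DD_def by (intro PiE_ext) auto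
    thus False using fz by simp
  qed
  define R where "R = (\<Union>i\<in>{..<k}. {i * PP k + 1 .. i * PP k + LL k (M - 1)})"
  have finR: "finite R" unfolding R_def by auto
  have cR: "card R \<le> k * LL k (M - 1)"
  proof -
    have "card R \<le> (\<Sum>i\<in>{..<k}. card {i * PP k + 1 .. i * PP k + LL k (M - 1)})"
      unfolding R_def by (rule card_UN_le) simp
    also have "\<dots> = k * LL k (M - 1)" by simp
    finally show ?thesis .
  qed
  define \<alpha> where "\<alpha> = real (k + 1 - M) / real (k+1)"
  have a0: "\<alpha> \<ge> 0" unfolding \<alpha>_def by simp
  have finA: "finite A" unfolding A_def by (rule Phi_finite)
  have hiA: "abundance (Fam k) x \<le> \<alpha>" if x: "x \<in> A - R" for x
  proof -
    obtain i q where iq: "i < k" "x = i * PP k + q" "1 \<le> q" "q \<le> LL k (f i)"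
      using Phi_elim[of x k f] x unfolding A_def by blast
    have qP: "q \<le> PP k" using iq(4) L_le_P[of k "f i"] DD_le[OF f iq(1)] k by simp
    have "\<not> q \<le> LL k (M - 1)"
    proof
      assume "q \<le> LL k (M - 1)"
      hence "x \<in> {i * PP k + 1 .. i * PP k + LL k (M - 1)}" using iq by simp
      hence "x \<in> R" unfolding R_def using iq(1) by blast
      thus False using x by simp
    qed
    hence "LL k (M - 1) < q" by simp
    thus ?thesis unfolding iq(2) \<alpha>_def using ab_hi[OF k iq(1) M1 Mk _ qP] by simp
  qed
  have s1: "(\<Sum>x\<in>A - R. abundance (Fam k) x) \<le> real (card A) * \<alpha>"
  proof -
    have "(\<Sum>x\<in>A - R. abundance (Fam k) x) \<le> (\<Sum>x\<in>A - R. \<alpha>)" using hiA by (rule sum_mono)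
    also have "\<dots> = real (card (A - R)) * \<alpha>" by simp
    also have "\<dots> \<le> real (card A) * \<alpha>" using a0 finA
      by (intro mult_right_mono) (simp_all add: card_mono)
    finally show ?thesis .
  qed
  have s2: "(\<Sum>x\<in>A \<inter> R. abundance (Fam k) x) \<le> real (k * LL k (M - 1))"
  proof -
    have "(\<Sum>x\<in>A \<inter> R. abundance (Fam k) x) \<le> (\<Sum>x\<in>A \<inter> R. 1)" using ab_le1[OF k] by (rule sum_mono)
    also have "\<dots> = real (card (A \<inter> R))" by simp
    also have "\<dots> \<le> real (card R)" using finR by (simp add: card_mono)
    also have "\<dots> \<le> real (k * LL k (M - 1))" using cR by (simp only: of_nat_le_iff)
    finally show ?thesis .
  qed
  have sA: "(\<Sum>x\<in>A. abundance (Fam k) x) \<le> real (card A) * \<alpha> + real (k * LL k (M - 1))"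
    using sum.Int_Diff[OF finA, of "abundance (Fam k)" R] s1 s2 by linarith
  have cA: "LL k M \<le> card A"
  proof -
    have "{i0 * PP k + 1 .. i0 * PP k + LL k M} \<subseteq> A" unfolding A_def Phi_def using i0 by auto
    from card_mono[OF finA this] show ?thesis by simp
  qed
  have LM: "LL k M > 0" using L_strict[OF k, of 0 M] M1 L_zero by simp
  have cApos: "real (card A) > 0" using cA LM by simp
  have rat: "real (k * LL k (M - 1)) / real (card A) \<le> 1 / real k"
  proof -
    have "real (k * LL k (M - 1)) / real (card A) \<le> real (k * LL k (M - 1)) / real (LL k M)"
      using cA LM by (intro divide_left_mono) simp_all
    also have "\<dots> \<le> 1 / real k"
    proof -
      have "k * LL k (M - 1) * k \<le> LL k M" using L_ratio[of k M] k M1 by simp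
      hence "real (k * LL k (M - 1)) * real k \<le> real (LL k M)" by (simp only: of_nat_mult[symmetric] of_nat_le_iff)
      thus ?thesis using LM k by (simp add: field_simps)
    qed
    finally show ?thesis .
  qed
  have "(1 / real (card A)) * (\<Sum>x\<in>A. abundance (Fam k) x) \<le> (1 / real (card A)) * (real (card A) * \<alpha> + real (k * LL k (M - 1)))"
    using sA cApos by (intro mult_left_mono) simp_all
  also have "\<dots> = \<alpha> + real (k * LL k (M - 1)) / real (card A)" using cApos by (simp add: field_simps)
  also have "\<dots> \<le> \<alpha> + 1 / real k" using rat by simp
  finally show ?thesis unfolding A_def \<alpha>_def M_def .
qed

lemma pow_step: "n^(k+1) + (k+1)*n^k \<le> (n+1)^(k+1::nat)" for n :: nat
proof (induction k)
  case 0 thus ?case by simp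
next
  case (Suc k)
  have "(n+1)^(Suc k + 1) = (n+1) * (n+1)^(k+1)" by simp
  also have "\<dots> \<ge> (n+1) * (n^(k+1) + (k+1)*n^k)" using Suc.IH by (rule mult_le_mono2)
  finally have a: "(n+1) * (n^(k+1) + (k+1)*n^k) \<le> (n+1)^(Suc k + 1)" .
  have "n^(Suc k + 1) + (Suc k + 1) * n^(Suc k) = n * n^(k+1) + n^(k+1) + (k+1) * (n * n^k)"
    by (simp add: algebra_simps)
  also have "\<dots> \<le> n * n^(k+1) + n^(k+1) + (k+1) * (n * n^k) + (k+1)*n^k" by simp
  also have "\<dots> = (n+1) * (n^(k+1) + (k+1)*n^k)" by (simp add: algebra_simps)
  finally show ?case using a by linarith
qed

lemma pow_sum: "(k+1) * (\<Sum>s<n. (s+1)^k) \<le> n^(k+1) + (k+1)*n^k" for n k :: nat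
proof (induction n)
  case 0 thus ?case by simp
next
  case (Suc n)
  have "(k+1) * (\<Sum>s<Suc n. (s+1)^k) = (k+1) * (\<Sum>s<n. (s+1)^k) + (k+1)*(n+1)^k" by (simp add: algebra_simps)
  also have "\<dots> \<le> n^(k+1) + (k+1)*n^k + (k+1)*(n+1)^k" using Suc.IH by simp
  also have "\<dots> \<le> (n+1)^(k+1) + (k+1)*(n+1)^k" using pow_step[of n k] by simp
  finally show ?case by simp
qed

lemma card_filter_sum: "finite S \<Longrightarrow> card {s\<in>S. P s} = (\<Sum>s\<in>S. if P s then 1 else (0::nat))"
  by (simp add: sum.inter_filter[symmetric])

lemma sum_mx: assumes k: "k \<ge> 2"
  shows "(\<Sum>f\<in>DD k. k + 1 - Max (f ` {..<k})) = (\<Sum>s<k+1. (s+1)^k)"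
proof -
  have ne: "0 \<in> {..<k}" using k by simp
  have Mle: "Max (f ` {..<k}) \<le> s \<longleftrightarrow> (\<forall>i<k. f i \<le> s)" for f s
    using ne by (subst Max_le_iff) auto
  have "(\<Sum>f\<in>DD k. k + 1 - Max (f ` {..<k})) = (\<Sum>f\<in>DD k. card {s\<in>{..<k+1}. Max (f ` {..<k}) \<le> s})"
  proof (rule sum.cong[OF refl])
    fix f assume f: "f \<in> DD k"
    have "Max (f ` {..<k}) \<le> k" using Mle DD_le[OF f] by blast
    moreover have "{s\<in>{..<k+1}. Max (f ` {..<k}) \<le> s} = {Max (f ` {..<k})..k}" by auto
    ultimately show "k + 1 - Max (f ` {..<k}) = card {s\<in>{..<k+1}. Max (f ` {..<k}) \<le> s}" by simp
  qed
  also have "\<dots> = (\<Sum>f\<in>DD k. \<Sum>s<k+1. if Max (f ` {..<k}) \<le> s then 1 else 0)"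
    by (intro sum.cong refl card_filter_sum) simp
  also have "\<dots> = (\<Sum>s<k+1. \<Sum>f\<in>DD k. if Max (f ` {..<k}) \<le> s then 1 else 0)"
    by (rule sum.swap)
  also have "\<dots> = (\<Sum>s<k+1. card {f\<in>DD k. Max (f ` {..<k}) \<le> s})"
    by (intro sum.cong refl card_filter_sum[symmetric] finite_DD)
  also have "\<dots> = (\<Sum>s<k+1. (s+1)^k)"
  proof (rule sum.cong[OF refl])
    fix s assume s: "s \<in> {..<k+1}"
    have "{f\<in>DD k. Max (f ` {..<k}) \<le> s} = PiE {..<k} (\<lambda>_. {0..s})"
    proof (intro set_eqI iffI)
      fix f assume "f \<in> {f\<in>DD k. Max (f ` {..<k}) \<le> s}"
      hence f: "f \<in> DD k" "\<forall>i<k. f i \<le> s" using Mle by auto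
      have e: "f \<in> extensional {..<k}" using f(1) unfolding DD_def PiE_iff by blast
      show "f \<in> PiE {..<k} (\<lambda>_. {0..s})" unfolding PiE_iff using e f(2) by auto
    next
      fix f assume f: "f \<in> PiE {..<k} (\<lambda>_. {0..s})"
      have e: "f \<in> extensional {..<k}" using f unfolding PiE_iff by blast
      have b: "\<forall>i<k. f i \<le> s" using PiE_mem[OF f] by simp
      hence "f \<in> DD k" unfolding DD_def PiE_iff using e s by auto
      thus "f \<in> {f\<in>DD k. Max (f ` {..<k}) \<le> s}" using b Mle by auto
    qed
    thus "card {f\<in>DD k. Max (f ` {..<k}) \<le> s} = (s+1)^k" by (simp add: card_PiE)
  qed
  finally show ?thesis .
qed

definition rr :: "nat \<Rightarrow> (nat \<Rightarrow> nat) \<Rightarrow> real" where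
  "rr k f = (1 / real (card (Phi k f))) * (\<Sum>x\<in>Phi k f. abundance (Fam k) x)"

lemma N_ge: "k \<ge> 2 \<Longrightarrow> (k+1)^k \<ge> (3::nat)"
proof -
  assume k: "k \<ge> 2"
  have "(k+1)^1 \<le> (k+1)^k" using k by (intro power_increasing) auto
  thus ?thesis using k by simp
qed

lemma AOD_Fam: assumes k: "k \<ge> 2"
  shows "AOD (Fam k) = (1 / real ((k+1)^k - 1)) * (\<Sum>f\<in>DD k - {zz k}. rr k f)"
proof -
  have "AOD (Fam k) = (1 / real (card (DD k) - 1)) * (\<Sum>f\<in>DD k - {zz k}. rr k f)"
    unfolding Fam_def rr_def
    by (rule AOD_reindex[OF Phi_inj[OF k] finite_DD zz_DD]) (use Phi_empty_iff[OF k] zz_DD in auto)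
  thus ?thesis unfolding card_DD .
qed

lemma rr_lo: assumes k: "k \<ge> 2" and f: "f \<in> DD k" "f \<noteq> zz k" shows "rr k f \<ge> 1 / real (k+1)"
proof -
  have ne: "Phi k f \<noteq> {}" using Phi_empty_iff[OF k f(1)] f(2) by simp
  have pos: "real (card (Phi k f)) > 0" using ne Phi_finite[of k f] by (simp add: card_gt_0_iff)
  have "real (card (Phi k f)) * (1 / real (k+1)) = (\<Sum>x\<in>Phi k f. 1 / real (k+1))" by simp
  also have "\<dots> \<le> (\<Sum>x\<in>Phi k f. abundance (Fam k) x)" using ab_lo[OF k f(1)] by (rule sum_mono)
  finally have "real (card (Phi k f)) * (1 / real (k+1)) \<le> (\<Sum>x\<in>Phi k f. abundance (Fam k) x)" .
  thus ?thesis unfolding rr_def using pos by (simp add: field_simps)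
qed

lemma AOD_lo: assumes k: "k \<ge> 2" shows "AOD (Fam k) \<ge> 1 / real (k+1)"
proof -
  have cD: "card (DD k - {zz k}) = (k+1)^k - 1" using card_DD[of k] zz_DD[of k] finite_DD[of k] by simp
  have "real ((k+1)^k - 1) * (1 / real (k+1)) = (\<Sum>f\<in>DD k - {zz k}. 1 / real (k+1))" using cD by simp
  also have "\<dots> \<le> (\<Sum>f\<in>DD k - {zz k}. rr k f)" using rr_lo[OF k] by (intro sum_mono) auto
  finally have s: "real ((k+1)^k - 1) * (1 / real (k+1)) \<le> (\<Sum>f\<in>DD k - {zz k}. rr k f)" .
  have "0 < (k+1)^k - (1::nat)" using N_ge[OF k] by simp
  hence pos: "real ((k+1)^k - 1) > 0" by (simp only: of_nat_0_less_iff)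
  show ?thesis unfolding AOD_Fam[OF k] using s pos by (simp add: field_simps)
qed

lemma AOD_hi: assumes k: "k \<ge> 2" shows "AOD (Fam k) \<le> 5 / real k"
proof -
  define N where "N = (k+1)^k"
  define \<alpha> where "\<alpha> = (\<lambda>f. real (k + 1 - Max (f ` {..<k})) / real (k+1))"
  have N3: "N \<ge> 3" unfolding N_def using N_ge[OF k] .
  have cD: "card (DD k - {zz k}) = N - 1" unfolding N_def using card_DD[of k] zz_DD[of k] finite_DD[of k] by simp
  have S: "(\<Sum>s<k+1. (s+1)^k) \<le> 2 * N"
  proof -
    have "(k+1) * (\<Sum>s<k+1. (s+1)^k) \<le> (k+1)^(k+1) + (k+1)*(k+1)^k" by (rule pow_sum)
    also have "\<dots> = (k+1) * (2 * N)" unfolding N_def by simp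
    finally show ?thesis by (subst (asm) mult_le_cancel1) simp
  qed
  have sa: "(\<Sum>f\<in>DD k. \<alpha> f) \<le> 2 * real N / real (k+1)"
  proof -
    have "(\<Sum>f\<in>DD k. \<alpha> f) = real (\<Sum>f\<in>DD k. k + 1 - Max (f ` {..<k})) / real (k+1)"
      unfolding \<alpha>_def by (simp add: sum_divide_distrib)
    also have "\<dots> = real (\<Sum>s<k+1. (s+1)^k) / real (k+1)" unfolding sum_mx[OF k] ..
    also have "\<dots> \<le> real (2 * N) / real (k+1)"
    proof -
      have "real (\<Sum>s<k+1. (s+1)^k) \<le> real (2 * N)" using S by (simp only: of_nat_le_iff)
      thus ?thesis by (rule divide_right_mono) simp
    qed
    finally show ?thesis by simp
  qed
  have "(\<Sum>f\<in>DD k - {zz k}. rr k f) \<le> (\<Sum>f\<in>DD k - {zz k}. \<alpha> f + 1 / real k)"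
    unfolding rr_def \<alpha>_def using ratio_le[OF k] by (intro sum_mono) auto
  also have "\<dots> = (\<Sum>f\<in>DD k - {zz k}. \<alpha> f) + real (N - 1) / real k"
    using cD by (simp add: sum.distrib)
  also have "(\<Sum>f\<in>DD k - {zz k}. \<alpha> f) \<le> (\<Sum>f\<in>DD k. \<alpha> f)"
    using finite_DD by (intro sum_mono2) (auto simp: \<alpha>_def)
  finally have s: "(\<Sum>f\<in>DD k - {zz k}. rr k f) \<le> 2 * real N / real (k+1) + real (N - 1) / real k"
    using sa by linarith
  have RN: "real (N - 1) = real N - 1" using N3 by simp
  have N1: "real N - 1 > 0" using N3 by simp
  have "AOD (Fam k) = (1 / (real N - 1)) * (\<Sum>f\<in>DD k - {zz k}. rr k f)"
    unfolding AOD_Fam[OF k] N_def[symmetric] RN ..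
  also have "\<dots> \<le> (1 / (real N - 1)) * (2 * real N / real (k+1) + (real N - 1) / real k)"
    using s N1 RN by (intro mult_left_mono) simp_all
  also have "\<dots> = (2 * real N / (real N - 1)) / real (k+1) + 1 / real k"
  proof -
    have gen: "\<And>a b c d::real. a > 0 \<Longrightarrow> c > 0 \<Longrightarrow> d > 0 \<Longrightarrow> (1/a)*(b/c + a/d) = (b/a)/c + 1/d"
      by (simp add: field_simps)
    show ?thesis using gen[OF N1, of "real (k+1)" "real k" "2 * real N"] k by simp
  qed
  also have "\<dots> \<le> 4 / real (k+1) + 1 / real k"
  proof -
    have "2 * real N / (real N - 1) \<le> 4" using N1 N3 by (simp add: field_simps)
    hence "(2 * real N / (real N - 1)) / real (k+1) \<le> 4 / real (k+1)" by (rule divide_right_mono) simp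
    thus ?thesis by linarith
  qed
  also have "\<dots> \<le> 4 / real k + 1 / real k"
  proof -
    have "4 / real (k+1) \<le> 4 / real k" using k by (intro divide_left_mono) simp_all
    thus ?thesis by linarith
  qed
  also have "\<dots> = 5 / real k" by simp
  finally show ?thesis .
qed

lemma log_facts:
  assumes k: "k \<ge> (2::nat)"
  defines "N \<equiv> real ((k+1)^k)"
  shows "(1/4) * (log 2 (log 2 N) / log 2 N) \<le> 1 / real (k+1)"
    and "5 / real k \<le> 10 * (log 2 (log 2 N) / log 2 N)"
proof -
  define l where "l = log 2 (real (k+1))"
  have lN: "log 2 N = real k * l" unfolding N_def l_def by (simp add: log_nat_power)
  have l1: "l \<ge> 1" unfolding l_def using k by simp
  have kpos: "real k > 0" using k by simp
  have lpos: "l > 0" using l1 by simp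
  have llog: "log 2 (real k * l) = log 2 (real k) + log 2 l" using kpos lpos by (rule log_mult_pos)
  have lk: "log 2 (real k) \<le> l" unfolding l_def using k by simp
  have lle: "l \<le> real (k+1)"
  proof -
    have "real (k+1) \<le> 2^(k+1)" proof -
      have "k+1 \<le> 2^(k+1)" using less_exp[of "k+1"] by simp
      hence "real (k+1) \<le> real (2^(k+1))" by (simp only: of_nat_le_iff)
      thus ?thesis by simp
    qed
    hence "l \<le> log 2 (2^(k+1))" unfolding l_def by simp
    also have "\<dots> = real (k+1) * log 2 2" by (rule log_nat_power) simp
    also have "\<dots> = real (k+1)" by simp
    finally show ?thesis .
  qed
  have ll: "log 2 l \<le> l" unfolding l_def using lpos lle l_def by simp
  have g_up: "log 2 (log 2 N) / log 2 N \<le> 2 / real k"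
  proof -
    have "log 2 (log 2 N) \<le> 2 * l" unfolding lN llog using lk ll by linarith
    hence "log 2 (log 2 N) / log 2 N \<le> (2 * l) / (real k * l)" unfolding lN using kpos lpos
      by (intro divide_right_mono) simp_all
    also have "\<dots> = 2 / real k" using lpos by simp
    finally show ?thesis .
  qed
  show "(1/4) * (log 2 (log 2 N) / log 2 N) \<le> 1 / real (k+1)"
  proof -
    have "(1/4) * (log 2 (log 2 N) / log 2 N) \<le> (1/4) * (2 / real k)" using g_up by simp
    also have "\<dots> \<le> 1 / real (k+1)" using k by (simp add: field_simps)
    finally show ?thesis .
  qed
  have lk2: "l \<le> 2 * log 2 (real k)"
  proof -
    have "2 * k \<le> k * k" using mult_le_mono1[OF k] .
    hence "k + 1 \<le> k * k" using k by linarith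
    hence "real (k+1) \<le> real (k * k)" by (simp only: of_nat_le_iff)
    hence "real (k+1) \<le> real k * real k" by simp
    hence "l \<le> log 2 (real k * real k)" unfolding l_def using k by simp
    also have "\<dots> = 2 * log 2 (real k)" using kpos by (simp add: log_mult_pos)
    finally show ?thesis .
  qed
  have "log 2 (real k) \<le> log 2 (log 2 N)" unfolding lN using kpos l1 by simp
  hence g_lo: "1 / (2 * real k) \<le> log 2 (log 2 N) / log 2 N"
  proof -
    assume a: "log 2 (real k) \<le> log 2 (log 2 N)"
    have "1 / (2 * real k) = (l / 2) / (real k * l)" using lpos by simp
    also have "\<dots> \<le> log 2 (log 2 N) / (real k * l)" using a lk2 kpos lpos by (intro divide_right_mono) simp_all
    finally show ?thesis unfolding lN .
  qed
  show "5 / real k \<le> 10 * (log 2 (log 2 N) / log 2 N)"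
  proof -
    have "5 / real k = 10 * (1 / (2 * real k))" by simp
    also have "\<dots> \<le> 10 * (log 2 (log 2 N) / log 2 N)" using g_lo by simp
    finally show ?thesis .
  qed
qed

definition nk :: "nat \<Rightarrow> nat" where "nk k = k * PP k"
definition kof :: "nat \<Rightarrow> nat" where "kof n = (SOME k. k \<ge> 2 \<and> nk k = n)"

lemma PP_pos: "k \<ge> 2 \<Longrightarrow> PP k \<ge> 1"
  using L_strict[of k 0 k] unfolding PP_def L_zero by simp

lemma nk_step: assumes k: "k \<ge> 1" shows "nk k < nk (Suc k)"
proof -
  have "k^2 \<le> (Suc k)^2" by (simp add: power_mono)
  hence "(k^2)^k \<le> ((Suc k)^2)^k" by (simp add: power_mono)
  also have "\<dots> \<le> ((Suc k)^2)^(Suc k)" by (intro power_increasing) auto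
  finally have "PP k \<le> PP (Suc k)" unfolding PP_def LL_def by linarith
  moreover have "PP (Suc k) \<ge> 1" using PP_pos[of "Suc k"] k by simp
  ultimately have "k * PP k \<le> k * PP (Suc k)" "k * PP (Suc k) < Suc k * PP (Suc k)" by simp_all
  thus ?thesis unfolding nk_def by linarith
qed

lemma nk_less: assumes "2 \<le> a" "a < b" shows "nk a < nk b"
proof -
  have "nk (Suc (a - 1)) < nk (Suc (b - 1))"
    by (rule lift_Suc_mono_less[of "\<lambda>j. nk (Suc j)"]) (use nk_step assms in auto)
  thus ?thesis using assms by simp
qed

lemma nk_inj: "inj_on nk {2..}"
proof (rule inj_onI)
  fix a b assume "a \<in> {2..}" "b \<in> {2..}" "nk a = nk b"
  hence "a \<ge> 2" "b \<ge> 2" "nk a = nk b" by auto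
  thus "a = b" using nk_less[of a b] nk_less[of b a] by (cases "a < b"; cases "b < a") auto
qed

lemma kof_nk: assumes "k \<ge> 2" shows "kof (nk k) = k"
proof -
  have "kof (nk k) \<ge> 2 \<and> nk (kof (nk k)) = nk k" unfolding kof_def by (rule someI[of _ k]) (use assms in simp)
  thus ?thesis using inj_onD[OF nk_inj, of "kof (nk k)" k] assms by simp
qed

lemma Fam_props: assumes k: "k \<ge> 2"
  shows "Fam k \<subseteq> Pow {1..nk k}" "union_closed (Fam k)" "Fam k \<noteq> {}" "Fam k \<noteq> {{}}"
    "card (Fam k) = (k+1)^k"
proof -
  show "Fam k \<subseteq> Pow {1..nk k}" unfolding Fam_def nk_def using Phi_sub[OF k] by auto
  show "union_closed (Fam k)" unfolding union_closed_def Fam_def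
  proof (intro ballI)
    fix A B assume "A \<in> Phi k ` DD k" "B \<in> Phi k ` DD k"
    then obtain f g where "f \<in> DD k" "g \<in> DD k" "A = Phi k f" "B = Phi k g" by auto
    thus "A \<union> B \<in> Phi k ` DD k" using Phi_union[OF k] by auto
  qed
  show "Fam k \<noteq> {}" unfolding Fam_def using zz_DD[of k] by auto
  define f1 where "f1 = restrict (\<lambda>_. k) {..<k}"
  have f1: "f1 \<in> DD k" unfolding f1_def DD_def by simp
  have "f1 0 \<noteq> zz k 0" unfolding f1_def zz_def using k by simp
  hence "f1 \<noteq> zz k" by metis
  hence "Phi k f1 \<noteq> {}" using Phi_empty_iff[OF k f1] by simp
  moreover have "Phi k f1 \<in> Fam k" unfolding Fam_def using f1 by simp
  ultimately show "Fam k \<noteq> {{}}" by auto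
  show "card (Fam k) = (k+1)^k" unfolding Fam_def card_image[OF Phi_inj[OF k]] card_DD ..
qed

theorem theorem2:
  shows "\<exists>(c::real) (C::real) (S::nat set) (F::nat \<Rightarrow> nat set set).
    c > 0 \<and> C > 0 \<and> infinite S \<and> (\<forall>n\<in>S. n > 0) \<and>
    (\<forall>n\<in>S. F n \<subseteq> Pow {1..n} \<and> union_closed (F n) \<and>
              F n \<noteq> {} \<and> F n \<noteq> {{}}) \<and>
    (\<forall>M::nat. finite {n\<in>S. card (F n) \<le> M}) \<and>
    (\<forall>n\<in>S.
       c * (log 2 (log 2 (real (card (F n)))) / log 2 (real (card (F n)))) \<le> AOD (F n) \<and>
       AOD (F n) \<le> C * (log 2 (log 2 (real (card (F n)))) / log 2 (real (card (F n)))))"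
proof (intro exI conjI)
  define S where "S = nk ` {2..}"
  define F where "F = (\<lambda>n. Fam (kof n))"
  have FS: "F (nk k) = Fam k" if "k \<ge> 2" for k unfolding F_def kof_nk[OF that] ..
  show "(1/4::real) > 0" by simp
  show "(10::real) > 0" by simp
  show "infinite S" unfolding S_def using nk_inj finite_imageD infinite_Ici by blast
  show "\<forall>n\<in>S. n > 0" unfolding S_def using PP_pos by (auto simp: nk_def Suc_le_eq)
  show "\<forall>n\<in>S. F n \<subseteq> Pow {1..n} \<and> union_closed (F n) \<and> F n \<noteq> {} \<and> F n \<noteq> {{}}"
    unfolding S_def using FS Fam_props by auto
  show "\<forall>M::nat. finite {n\<in>S. card (F n) \<le> M}"
  proof
    fix M :: nat
    have "{n\<in>S. card (F n) \<le> M} \<subseteq> nk ` {2..M}"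
    proof
      fix n assume "n \<in> {n\<in>S. card (F n) \<le> M}"
      then obtain k where k: "k \<ge> 2" "n = nk k" "card (Fam k) \<le> M" unfolding S_def using FS by auto
      have "(2::nat)^k \<le> (k+1)^k" using k(1) by (intro power_mono) simp_all
      hence "k < (k+1)^k" using less_exp[of k] by linarith
      hence "k \<le> M" using k Fam_props(5)[OF k(1)] by simp
      thus "n \<in> nk ` {2..M}" using k by auto
    qed
    thus "finite {n\<in>S. card (F n) \<le> M}" by (rule finite_subset) simp
  qed
  show "\<forall>n\<in>S.
       1/4 * (log 2 (log 2 (real (card (F n)))) / log 2 (real (card (F n)))) \<le> AOD (F n) \<and>
       AOD (F n) \<le> 10 * (log 2 (log 2 (real (card (F n)))) / log 2 (real (card (F n))))"
  proof
    fix n assume "n \<in> S"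
    then obtain k where k: "k \<ge> 2" "n = nk k" unfolding S_def by auto
    have Fn: "F n = Fam k" using FS k by simp
    show "1/4 * (log 2 (log 2 (real (card (F n)))) / log 2 (real (card (F n)))) \<le> AOD (F n) \<and>
       AOD (F n) \<le> 10 * (log 2 (log 2 (real (card (F n)))) / log 2 (real (card (F n))))"
      unfolding Fn Fam_props(5)[OF k(1)]
      using log_facts[OF k(1)] AOD_lo[OF k(1)] AOD_hi[OF k(1)] by linarith
  qed
qed

end
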